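(* Every finitely presented thin groupoid has deficiency $0$.
   Context: A small graph $G$ consists of a set of objects, a set of arrows, and domain and codomain maps. $\mathcal{L}_1\mathcal{F}_1(G)$ is the free groupoid on $G$. A small groupoidal computad $\mathfrak{g}=(G,\mathfrak{g}_2,s,t)$ is a set $\mathfrak{g}_2$ with, for each $\alpha\in\mathfrak{g}_2$, two parallel morphisms $s(\alpha),t(\alpha)$ of $\mathcal{L}_1\mathcal{F}_1(G)$. It is connected if $G$ is connected. It presents a groupoid $X$ if $X$ is isomorphic to the quotient of $\mathcal{L}_1\mathcal{F}_1(G)$ by the relations $s(\alpha)=t(\alpha)$. $\mathcal{F}_{\mathrm{Top}_1}(G)$ is the topological realization of $G$: vertices, with an interval glued per arrow. $\chi$ is the Euler characteristic with real coefficients. A groupoid $X$ is finitely presented if some small connected groupoidal computad $(G,\mathfrak{g}_2,s,t)$ with $\chi(\mathcal{F}_{\mathrm{Top}_1}(G))\in\mathbb{Z}$ and $\mathfrak{g}_2$ finite presents $X$. The deficiency of such a presentation is $1-|\mathfrak{g}_2|-\chi(\mathcal{F}_{\mathrm{Top}_1}(G))$. This equals $1-\chi$ of the $2$-complex obtained from $\mathcal{F}_{\mathrm{Top}_1}(G)$ by attaching one $2$-cell per $\alpha$ along the loop given by $s(\alpha)$ followed by $t(\alpha)$ reversed. The deficiency of a finitely presented groupoid $X$ is the maximum of the deficiencies of all such finite presentations of $X$. A groupoid is thin if it has at most one morphism between any two objects. *)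

theory Defs
  imports Complex_Main
begin

record ('v,'a) graph =
  verts :: "'v set"
  arrs  :: "'a set"
  gsrc  :: "'a \<Rightarrow> 'v"
  gtgt  :: "'a \<Rightarrow> 'v"

definition graph_wf :: "('v,'a) graph \<Rightarrow> bool" where
  "graph_wf G \<longleftrightarrow> (\<forall>e\<in>arrs G. gsrc G e \<in> verts G \<and> gtgt G e \<in> verts G)"

text \<open>Letters of the free groupoid: an arrow traversed forwards (True) or backwards (False).\<close>
type_synonym 'a letter = "'a \<times> bool"

fun lsrc :: "('v,'a) graph \<Rightarrow> 'a letter \<Rightarrow> 'v" where
  "lsrc G (a, b) = (if b then gsrc G a else gtgt G a)"

fun ltgt :: "('v,'a) graph \<Rightarrow> 'a letter \<Rightarrow> 'v" where
  "ltgt G (a, b) = (if b then gtgt G a else gsrc G a)"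

fun linv :: "'a letter \<Rightarrow> 'a letter" where
  "linv (a, b) = (a, \<not> b)"

definition winv :: "'a letter list \<Rightarrow> 'a letter list" where
  "winv w = rev (map linv w)"

fun is_path :: "('v,'a) graph \<Rightarrow> 'v \<Rightarrow> 'a letter list \<Rightarrow> 'v \<Rightarrow> bool" where
  "is_path G x [] y \<longleftrightarrow> x \<in> verts G \<and> x = y"
| "is_path G x (l # w) y \<longleftrightarrow> fst l \<in> arrs G \<and> lsrc G l = x \<and> is_path G (ltgt G l) w y"

definition reduced :: "'a letter list \<Rightarrow> bool" where
  "reduced w \<longleftrightarrow> (\<forall>i. Suc i < length w \<longrightarrow> w ! Suc i \<noteq> linv (w ! i))"

text \<open>Morphisms of the free groupoid L1F1(G): reduced words with their endpoints.\<close>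
definition free_mor :: "('v,'a) graph \<Rightarrow> ('v \<times> 'a letter list \<times> 'v) set" where
  "free_mor G = {(x, w, y). is_path G x w y \<and> reduced w}"

definition graph_connected :: "('v,'a) graph \<Rightarrow> bool" where
  "graph_connected G \<longleftrightarrow> verts G \<noteq> {} \<and> (\<forall>x\<in>verts G. \<forall>y\<in>verts G. \<exists>w. is_path G x w y)"

section \<open>Euler characteristic (real coefficients) of the realization, via cellular homology\<close>

definition conn_rel :: "('v,'a) graph \<Rightarrow> ('v \<times> 'v) set" where
  "conn_rel G = {(x, y). \<exists>w. is_path G x w y}"

text \<open>Real cellular 1-chains: finitely supported real functions on the arrows.\<close>
definition chains1 :: "('v,'a) graph \<Rightarrow> ('a \<Rightarrow> real) set" where
  "chains1 G = {c. finite {e. c e \<noteq> 0} \<and> {e. c e \<noteq> 0} \<subseteq> arrs G}"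

definition bdry :: "('v,'a) graph \<Rightarrow> ('a \<Rightarrow> real) \<Rightarrow> 'v \<Rightarrow> real" where
  "bdry G c v = (\<Sum>e\<in>{e. c e \<noteq> 0}. (if gtgt G e = v then c e else 0) - (if gsrc G e = v then c e else 0))"

text \<open>H_1 of a graph (no 2-cells) = the real cycle space.\<close>
definition cycles :: "('v,'a) graph \<Rightarrow> ('a \<Rightarrow> real) set" where
  "cycles G = {c \<in> chains1 G. \<forall>v. bdry G c v = 0}"

definition betti1_is :: "('v,'a) graph \<Rightarrow> nat \<Rightarrow> bool" where
  "betti1_is G n \<longleftrightarrow> (\<exists>B. finite B \<and> card B = n \<and> B \<subseteq> cycles G
     \<and> (\<forall>u. (\<forall>e. (\<Sum>b\<in>B. u b * b e) = 0) \<longrightarrow> (\<forall>b\<in>B. u b = 0))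
     \<and> (\<forall>c\<in>cycles G. \<exists>u. \<forall>e. c e = (\<Sum>b\<in>B. u b * b e)))"

text \<open>chi(F_Top1(G)) is defined and equals the integer k: dim H_0 = number of
  connected components (finite), dim H_1 finite, k = dim H_0 - dim H_1.\<close>
definition euler_char_is :: "('v,'a) graph \<Rightarrow> int \<Rightarrow> bool" where
  "euler_char_is G k \<longleftrightarrow> (\<exists>n0 n1. finite (verts G // conn_rel G) \<and> card (verts G // conn_rel G) = n0
      \<and> betti1_is G n1 \<and> k = int n0 - int n1)"

record ('o,'m) groupoid =
  Obj :: "'o set"
  Mor :: "'m set"
  Dom :: "'m \<Rightarrow> 'o"
  Cod :: "'m \<Rightarrow> 'o"
  Idt :: "'o \<Rightarrow> 'm"
  Comp :: "'m \<Rightarrow> 'm \<Rightarrow> 'm"  \<comment> \<open>Comp g f = g after f, defined when Cod f = Dom g\<close>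

definition is_groupoid :: "('o,'m) groupoid \<Rightarrow> bool" where
  "is_groupoid X \<longleftrightarrow>
     (\<forall>f\<in>Mor X. Dom X f \<in> Obj X \<and> Cod X f \<in> Obj X)
   \<and> (\<forall>x\<in>Obj X. Idt X x \<in> Mor X \<and> Dom X (Idt X x) = x \<and> Cod X (Idt X x) = x)
   \<and> (\<forall>f\<in>Mor X. \<forall>g\<in>Mor X. Cod X f = Dom X g \<longrightarrow>
        Comp X g f \<in> Mor X \<and> Dom X (Comp X g f) = Dom X f \<and> Cod X (Comp X g f) = Cod X g)
   \<and> (\<forall>f\<in>Mor X. \<forall>g\<in>Mor X. \<forall>h\<in>Mor X. Cod X f = Dom X g \<longrightarrow> Cod X g = Dom X h \<longrightarrow>
        Comp X h (Comp X g f) = Comp X (Comp X h g) f)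
   \<and> (\<forall>f\<in>Mor X. Comp X f (Idt X (Dom X f)) = f \<and> Comp X (Idt X (Cod X f)) f = f)
   \<and> (\<forall>f\<in>Mor X. \<exists>g\<in>Mor X. Dom X g = Cod X f \<and> Cod X g = Dom X f \<and>
        Comp X g f = Idt X (Dom X f) \<and> Comp X f g = Idt X (Cod X f))"

definition thin :: "('o,'m) groupoid \<Rightarrow> bool" where
  "thin X \<longleftrightarrow> (\<forall>f\<in>Mor X. \<forall>g\<in>Mor X. Dom X f = Dom X g \<and> Cod X f = Cod X g \<longrightarrow> f = g)"

definition groupoid_iso :: "('o,'m) groupoid \<Rightarrow> ('p,'n) groupoid \<Rightarrow> bool" where
  "groupoid_iso X Y \<longleftrightarrow> (\<exists>Fo Fm. bij_betw Fo (Obj X) (Obj Y) \<and> bij_betw Fm (Mor X) (Mor Y)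
     \<and> (\<forall>f\<in>Mor X. Dom Y (Fm f) = Fo (Dom X f) \<and> Cod Y (Fm f) = Fo (Cod X f))
     \<and> (\<forall>x\<in>Obj X. Fm (Idt X x) = Idt Y (Fo x))
     \<and> (\<forall>f\<in>Mor X. \<forall>g\<in>Mor X. Cod X f = Dom X g \<longrightarrow> Fm (Comp X g f) = Comp Y (Fm g) (Fm f)))"

record ('v,'a,'c) computad =
  cgraph :: "('v,'a) graph"
  cells  :: "'c set"
  csrc   :: "'c \<Rightarrow> 'v \<times> 'a letter list \<times> 'v"
  ctgt   :: "'c \<Rightarrow> 'v \<times> 'a letter list \<times> 'v"

definition computad_wf :: "('v,'a,'c) computad \<Rightarrow> bool" where
  "computad_wf P \<longleftrightarrow> graph_wf (cgraph P) \<and>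
     (\<forall>\<alpha>\<in>cells P. csrc P \<alpha> \<in> free_mor (cgraph P) \<and> ctgt P \<alpha> \<in> free_mor (cgraph P)
        \<and> fst (csrc P \<alpha>) = fst (ctgt P \<alpha>) \<and> snd (snd (csrc P \<alpha>)) = snd (snd (ctgt P \<alpha>)))"

definition word :: "'v \<times> 'a letter list \<times> 'v \<Rightarrow> 'a letter list" where
  "word p = fst (snd p)"

definition is_path3 :: "('v,'a) graph \<Rightarrow> 'v \<times> 'a letter list \<times> 'v \<Rightarrow> bool" where
  "is_path3 G p \<longleftrightarrow> is_path G (fst p) (fst (snd p)) (snd (snd p))"

inductive pstep :: "('v,'a,'c) computad \<Rightarrow> 'v \<times> 'a letter list \<times> 'v \<Rightarrow> 'v \<times> 'a letter list \<times> 'v \<Rightarrow> bool"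
  for P where
  cancel: "is_path (cgraph P) x (u @ [l, linv l] @ v) y \<Longrightarrow> is_path (cgraph P) x (u @ v) y \<Longrightarrow>
           pstep P (x, u @ [l, linv l] @ v, y) (x, u @ v, y)"
| relate: "\<alpha> \<in> cells P \<Longrightarrow> is_path (cgraph P) x (u @ word (csrc P \<alpha>) @ v) y \<Longrightarrow>
           is_path (cgraph P) x (u @ word (ctgt P \<alpha>) @ v) y \<Longrightarrow>
           pstep P (x, u @ word (csrc P \<alpha>) @ v, y) (x, u @ word (ctgt P \<alpha>) @ v, y)"

definition pclass :: "('v,'a,'c) computad \<Rightarrow> 'v \<times> 'a letter list \<times> 'v \<Rightarrow> ('v \<times> 'a letter list \<times> 'v) set" where
  "pclass P p = {q. equivclp (pstep P) p q}"

definition crep :: "('v \<times> 'a letter list \<times> 'v) set \<Rightarrow> 'v \<times> 'a letter list \<times> 'v" where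
  "crep m = (SOME p. p \<in> m)"

text \<open>The groupoid presented by P: the free groupoid on the graph modulo s(alpha) = t(alpha).
  Morphisms x -> y are classes of paths x -> y.\<close>
definition presented :: "('v,'a,'c) computad \<Rightarrow> ('v, ('v \<times> 'a letter list \<times> 'v) set) groupoid" where
  "presented P = \<lparr> Obj = verts (cgraph P),
     Mor = {pclass P p | p. is_path3 (cgraph P) p},
     Dom = (\<lambda>m. fst (crep m)),
     Cod = (\<lambda>m. snd (snd (crep m))),
     Idt = (\<lambda>x. pclass P (x, [], x)),
     Comp = (\<lambda>g f. pclass P (fst (crep f), word (crep f) @ word (crep g), snd (snd (crep g)))) \<rparr>"

definition presents :: "('v,'a,'c) computad \<Rightarrow> ('o,'m) groupoid \<Rightarrow> bool" where
  "presents P X \<longleftrightarrow> groupoid_iso (presented P) X"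

definition fin_presentation :: "('o,'m) groupoid \<Rightarrow> ('v,'a,'c) computad \<Rightarrow> bool" where
  "fin_presentation X P \<longleftrightarrow> computad_wf P \<and> graph_connected (cgraph P)
     \<and> (\<exists>k. euler_char_is (cgraph P) k) \<and> finite (cells P) \<and> presents P X"

definition has_deficiency :: "('v,'a,'c) computad \<Rightarrow> int \<Rightarrow> bool" where
  "has_deficiency P d \<longleftrightarrow> (\<exists>k. euler_char_is (cgraph P) k \<and> d = 1 - int (card (cells P)) - k)"

end

theory Submission imports Defs "HOL-Library.Function_Algebras" begin

lemma is_path_verts: "graph_wf G \<Longrightarrow> is_path G x w y \<Longrightarrow> x \<in> verts G \<and> y \<in> verts G"
proof (induction w arbitrary: x)
  case Nil then show ?case by auto
next
  case (Cons l w)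
  then show ?case by (cases l) (auto split: if_splits simp: graph_wf_def)
qed

lemma is_path_append: "graph_wf G \<Longrightarrow> is_path G x (u @ v) y \<longleftrightarrow> (\<exists>z. is_path G x u z \<and> is_path G z v y)"
proof (induction u arbitrary: x)
  case Nil
  then show ?case using is_path_verts by fastforce
next
  case (Cons l u) then show ?case by auto
qed

lemma lsrc_linv[simp]: "lsrc G (linv l) = ltgt G l" by (cases l) auto
lemma ltgt_linv[simp]: "ltgt G (linv l) = lsrc G l" by (cases l) auto
lemma fst_linv[simp]: "fst (linv l) = fst l" by (cases l) auto

lemma is_path_winv: "graph_wf G \<Longrightarrow> is_path G x w y \<Longrightarrow> is_path G y (winv w) x"
proof (induction w arbitrary: x)
  case Nil then show ?case by (auto simp add: winv_def)
next
  case (Cons l w)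
  then have "is_path G y (winv w) (ltgt G l)" by simp
  moreover have "is_path G (ltgt G l) [linv l] x" using Cons.prems is_path_verts by fastforce
  ultimately show ?case using is_path_append[OF Cons.prems(1), of y "winv w" "[linv l]" x]
    by (auto simp: winv_def)
qed

lemma is_path_end: "is_path G x w y \<Longrightarrow> y \<in> verts G"
  by (induction w arbitrary: x) auto

lemma pstep_ends: "pstep P p q \<Longrightarrow> fst p = fst q \<and> snd (snd p) = snd (snd q)"
  by (induction rule: pstep.induct) auto

lemma equivclp_ends: "equivclp (pstep P) p q \<Longrightarrow> fst p = fst q \<and> snd (snd p) = snd (snd q)"
  unfolding equivclp_def
proof (induction rule: rtranclp_induct)
  case base then show ?case by simp
next
  case (step y z) then show ?case by (auto simp: symclp_def dest: pstep_ends)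
qed

lemma pclass_self: "p \<in> pclass P p" by (simp add: pclass_def)

lemma crep_pclass: "equivclp (pstep P) p (crep (pclass P p))"
  unfolding crep_def using pclass_self[of p P] by (metis (mono_tags) mem_Collect_eq pclass_def someI)

lemma Dom_pres[simp]: "Dom (presented P) (pclass P p) = fst p"
  using equivclp_ends[OF crep_pclass[of P p]] by (simp add: presented_def)
lemma Cod_pres[simp]: "Cod (presented P) (pclass P p) = snd (snd p)"
  using equivclp_ends[OF crep_pclass[of P p]] by (simp add: presented_def)

lemma pclass_eq_iff: "pclass P p = pclass P q \<longleftrightarrow> equivclp (pstep P) p q"
  unfolding pclass_def
  by (metis (no_types, lifting) equivclp_sym equivclp_trans mem_Collect_eq equivclp_refl set_eq_iff)

definition fsc :: "real \<Rightarrow> ('a \<Rightarrow> real) \<Rightarrow> ('a \<Rightarrow> real)" where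
  "fsc r f = (\<lambda>x. r * f x)"

interpretation fv: vector_space fsc
  by unfold_locales (auto simp: fsc_def algebra_simps)

lemma sum_apply': "(sum f A) x = (\<Sum>a\<in>A. f a x)"
  by (induction A rule: infinite_finite_induct) auto

fun ab :: "'a letter list \<Rightarrow> 'a \<Rightarrow> real" where
  "ab [] = (\<lambda>e. 0)"
| "ab (l # w) = (\<lambda>e. (if e = fst l then (if snd l then 1 else -1) else 0) + ab w e)"

lemma ab_append: "ab (u @ v) = ab u + ab v"
  by (induction u) (auto simp: fun_eq_iff)

lemma ab_cancel: "ab [l, linv l] = 0"
  by (cases l) (auto simp: fun_eq_iff)

lemma ab_winv: "ab (winv w) = - ab w"
proof (induction w)
  case Nil then show ?case by (auto simp: winv_def fun_eq_iff)
next
  case (Cons l w)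
  have "ab (winv (l # w)) = ab (winv w) + ab [linv l]" by (simp add: winv_def ab_append)
  also have "ab [linv l] = - ab [l]" by (cases l) (auto simp: fun_eq_iff)
  finally show ?case using Cons by (simp add: fun_eq_iff)
qed

definition dlt :: "('v,'a,'c) computad \<Rightarrow> 'c \<Rightarrow> 'a \<Rightarrow> real" where
  "dlt Q \<alpha> = ab (word (csrc Q \<alpha>)) - ab (word (ctgt Q \<alpha>))"

lemma pstep_ab: "pstep Q p q \<Longrightarrow> ab (word p) - ab (word q) \<in> fv.span (dlt Q ` cells Q)"
proof (induction rule: pstep.induct)
  case (cancel x u l v y)
  then show ?case using ab_cancel[of l] by (simp add: word_def ab_append fv.span_zero fv.span_zero[unfolded zero_fun_def])
next
  case (relate \<alpha> x u v y)
  have "ab (word (x, u @ word (csrc Q \<alpha>) @ v, y)) - ab (word (x, u @ word (ctgt Q \<alpha>) @ v, y)) = dlt Q \<alpha>"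
    by (simp add: word_def ab_append dlt_def)
  then show ?case using relate by (simp add: fv.span_base)
qed

lemma equivclp_ab: "equivclp (pstep Q) p q \<Longrightarrow> ab (word p) - ab (word q) \<in> fv.span (dlt Q ` cells Q)"
  unfolding equivclp_def
proof (induction rule: rtranclp_induct)
  case base then show ?case by (simp add: fv.span_zero fv.span_zero[unfolded zero_fun_def])
next
  case (step y z)
  from step(2) have "pstep Q y z \<or> pstep Q z y" by (auto simp: symclp_def)
  then have "ab (word y) - ab (word z) \<in> fv.span (dlt Q ` cells Q)"
  proof
    assume "pstep Q y z" then show ?thesis by (rule pstep_ab)
  next
    assume "pstep Q z y"
    then have "ab (word z) - ab (word y) \<in> fv.span (dlt Q ` cells Q)" by (rule pstep_ab)
    then have "- (ab (word z) - ab (word y)) \<in> fv.span (dlt Q ` cells Q)" by (rule fv.span_neg)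
    then show ?thesis by simp
  qed
  then have "(ab (word p) - ab (word y)) + (ab (word y) - ab (word z)) \<in> fv.span (dlt Q ` cells Q)"
    using step(3) by (rule fv.span_add[rotated])
  moreover have "(ab (word p) - ab (word y)) + (ab (word y) - ab (word z)) = ab (word p) - ab (word z)"
    by (simp add: fun_eq_iff)
  ultimately show ?case by metis
qed

lemma flow_zero:
  fixes c :: "'a \<Rightarrow> real"
  assumes F: "finite F"
    and bd: "\<And>v. (\<Sum>e\<in>F. (if t e = v then c e else 0) - (if s e = v then c e else 0)) = 0"
  shows "(\<Sum>e\<in>F. c e * (h (s e) - h (t e))) = (0::real)"
proof -
  define V where "V = s ` F \<union> t ` F"
  have fV: "finite V" using F by (simp add: V_def)
  have key: "(\<Sum>e\<in>F. c e * h (g e)) = (\<Sum>v\<in>V. h v * (\<Sum>e\<in>F. if g e = v then c e else 0))"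
    if gV: "g ` F \<subseteq> V" for g
  proof -
    have "(\<Sum>v\<in>V. h v * (\<Sum>e\<in>F. if g e = v then c e else 0))
        = (\<Sum>v\<in>V. \<Sum>e\<in>F. if g e = v then c e * h v else 0)"
      by (simp add: sum_distrib_left if_distrib mult.commute cong: if_cong)
    also have "\<dots> = (\<Sum>e\<in>F. \<Sum>v\<in>V. if g e = v then c e * h v else 0)"
      by (rule sum.swap)
    also have "\<dots> = (\<Sum>e\<in>F. c e * h (g e))"
    proof (rule sum.cong[OF refl])
      fix e assume "e \<in> F"
      then have "g e \<in> V" using gV by auto
      then show "(\<Sum>v\<in>V. if g e = v then c e * h v else 0) = c e * h (g e)"
        using fV by (simp add: sum.delta)
    qed
    finally show ?thesis by simp
  qed
  have "(\<Sum>e\<in>F. c e * (h (s e) - h (t e))) = (\<Sum>e\<in>F. c e * h (s e)) - (\<Sum>e\<in>F. c e * h (t e))"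
    by (simp add: right_diff_distrib sum_subtractf)
  also have "\<dots> = (\<Sum>v\<in>V. h v * ((\<Sum>e\<in>F. if s e = v then c e else 0) - (\<Sum>e\<in>F. if t e = v then c e else 0)))"
    using key[of s] key[of t] by (simp add: V_def right_diff_distrib sum_subtractf)
  also have "\<dots> = (\<Sum>v\<in>V. h v * - (\<Sum>e\<in>F. (if t e = v then c e else 0) - (if s e = v then c e else 0)))"
    by (simp add: sum_subtractf)
  also have "\<dots> = 0" using bd by simp
  finally show ?thesis .
qed

lemma ab_single: "ab [(e, True)] = (\<lambda>x. if x = e then 1 else 0)"
  by (auto simp: fun_eq_iff)

lemma cycle_in_span:
  assumes wf: "graph_wf G" and conn: "graph_connected G" and r: "r \<in> verts G"
    and c: "c \<in> cycles G"
    and loops: "\<And>L. is_path G r L r \<Longrightarrow> ab L \<in> fv.span D"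
  shows "c \<in> fv.span D"
proof -
  have "\<forall>v\<in>verts G. \<exists>w. is_path G r w v" using conn r by (auto simp: graph_connected_def)
  then obtain p where p: "\<And>v. v \<in> verts G \<Longrightarrow> is_path G r (p v) v" by metis
  define F where "F = {e. c e \<noteq> 0}"
  have fF: "finite F" and FA: "F \<subseteq> arrs G" using c by (auto simp: cycles_def chains1_def F_def)
  have bd: "\<And>v. bdry G c v = 0" using c by (auto simp: cycles_def)
  define Le where "Le e = p (gsrc G e) @ [(e, True)] @ winv (p (gtgt G e))" for e
  have Lpath: "is_path G r (Le e) r" if "e \<in> F" for e
  proof -
    have e: "e \<in> arrs G" using that FA by auto
    then have sv: "gsrc G e \<in> verts G" and tv: "gtgt G e \<in> verts G" using wf by (auto simp: graph_wf_def)
    have "is_path G (gsrc G e) [(e, True)] (gtgt G e)" using e tv by simp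
    moreover have "is_path G (gtgt G e) (winv (p (gtgt G e))) r" using is_path_winv[OF wf p[OF tv]] .
    ultimately show ?thesis using p[OF sv] unfolding Le_def
      by (auto simp: is_path_append[OF wf])
  qed
  have abL: "ab (Le e) = (\<lambda>x. ab (p (gsrc G e)) x + (if x = e then 1 else 0) - ab (p (gtgt G e)) x)" for e
    by (simp add: Le_def ab_append ab_winv ab_single fun_eq_iff)
  have eq: "c = (\<Sum>e\<in>F. fsc (c e) (ab (Le e)))"
  proof
    fix x
    have "(\<Sum>e\<in>F. fsc (c e) (ab (Le e))) x
        = (\<Sum>e\<in>F. c e * (if x = e then 1 else 0)) + (\<Sum>e\<in>F. c e * ((\<lambda>v. ab (p v) x) (gsrc G e) - (\<lambda>v. ab (p v) x) (gtgt G e)))"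
      by (simp add: sum_apply' fsc_def abL algebra_simps sum.distrib sum_subtractf)
    also have "(\<Sum>e\<in>F. c e * ((\<lambda>v. ab (p v) x) (gsrc G e) - (\<lambda>v. ab (p v) x) (gtgt G e))) = 0"
      by (rule flow_zero[OF fF]) (use bd in \<open>simp add: bdry_def F_def\<close>)
    also have "(\<Sum>e\<in>F. c e * (if x = e then 1 else 0)) = c x"
      using fF by (cases "x \<in> F") (auto simp: F_def if_distrib cong: if_cong)
    finally show "c x = (\<Sum>e\<in>F. fsc (c e) (ab (Le e))) x" by simp
  qed
  have "(\<Sum>e\<in>F. fsc (c e) (ab (Le e))) \<in> fv.span D"
    by (rule fv.span_sum) (use Lpath loops in \<open>auto intro: fv.span_scale\<close>)
  then show ?thesis using eq by simp
qed

lemma quot_conn: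
  assumes "graph_connected G" shows "verts G // conn_rel G = {verts G}"
proof -
  have "conn_rel G `` {x} = verts G" if "x \<in> verts G" for x
    using assms that by (auto simp: graph_connected_def conn_rel_def dest: is_path_end)
  moreover have "verts G \<noteq> {}" using assms by (simp add: graph_connected_def)
  ultimately show ?thesis by (auto simp: quotient_def)
qed

lemma loop_trivial:
  assumes th: "thin X" and pr: "presents Q X" and L: "is_path (cgraph Q) r L r"
  shows "equivclp (pstep Q) (r, [], r) (r, L, r)"
proof -
  obtain Fo Fm where bm: "bij_betw Fm (Mor (presented Q)) (Mor X)"
    and dc: "\<forall>f\<in>Mor (presented Q). Dom X (Fm f) = Fo (Dom (presented Q) f) \<and> Cod X (Fm f) = Fo (Cod (presented Q) f)"
    using pr by (auto simp: presents_def groupoid_iso_def)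
  have rv: "r \<in> verts (cgraph Q)" using L by (rule is_path_end)
  have m1: "pclass Q (r, L, r) \<in> Mor (presented Q)" using L
    by (auto simp: presented_def is_path3_def)
  have m2: "pclass Q (r, [], r) \<in> Mor (presented Q)" using rv
    by (auto simp: presented_def is_path3_def intro!: exI[of _ r] exI[of _ "[]"])
  have i1: "Fm (pclass Q (r, L, r)) \<in> Mor X" and i2: "Fm (pclass Q (r, [], r)) \<in> Mor X"
    using m1 m2 bm by (auto simp: bij_betw_def)
  have "Fm (pclass Q (r, L, r)) = Fm (pclass Q (r, [], r))"
    using th i1 i2 dc m1 m2 unfolding thin_def by simp
  then have "pclass Q (r, L, r) = pclass Q (r, [], r)"
    using bm m1 m2 by (auto simp: bij_betw_def inj_on_def)
  then show ?thesis by (simp add: pclass_eq_iff equivclp_sym)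
qed

lemma part2:
  assumes th: "thin X" and fp: "fin_presentation X Q" and hd: "has_deficiency Q d"
  shows "d \<le> 0"
proof -
  let ?G = "cgraph Q"
  have wf: "graph_wf ?G" and conn: "graph_connected ?G" and fin: "finite (cells Q)"
    and pr: "presents Q X"
    using fp by (auto simp: fin_presentation_def computad_wf_def)
  obtain k where ek: "euler_char_is ?G k" and dk: "d = 1 - int (card (cells Q)) - k"
    using hd by (auto simp: has_deficiency_def)
  obtain n1 where b1: "betti1_is ?G n1" and kk: "k = 1 - int n1"
    using ek quot_conn[OF conn] by (auto simp: euler_char_is_def)
  obtain B where fB: "finite B" and cB: "card B = n1" and Bc: "B \<subseteq> cycles ?G"
    and ind: "\<forall>u. (\<forall>e. (\<Sum>b\<in>B. u b * b e) = 0) \<longrightarrow> (\<forall>b\<in>B. u b = 0)"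
    using b1 by (auto simp: betti1_is_def)
  obtain r where r: "r \<in> verts ?G" using conn by (auto simp: graph_connected_def)
  let ?D = "dlt Q ` cells Q"
  have loops: "ab L \<in> fv.span ?D" if "is_path ?G r L r" for L
  proof -
    have "ab (word (r, [], r)) - ab (word (r, L, r)) \<in> fv.span ?D"
      by (rule equivclp_ab[OF loop_trivial[OF th pr that]])
    then have "- (ab (word (r, [], r)) - ab (word (r, L, r))) \<in> fv.span ?D" by (rule fv.span_neg)
    moreover have "- (ab (word (r, [], r)) - ab (word (r, L, r))) = ab L"
      by (simp add: word_def fun_eq_iff)
    ultimately show ?thesis by simp
  qed
  have sub: "B \<subseteq> fv.span ?D"
    using Bc cycle_in_span[OF wf conn r _ loops] by blast
  have indep: "fv.independent B"
  proof
    assume "fv.dependent B"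
    then obtain u where u: "\<exists>v\<in>B. u v \<noteq> 0" and s0: "(\<Sum>v\<in>B. fsc (u v) v) = 0"
      using fv.dependent_finite[OF fB] by auto
    have "\<forall>e. (\<Sum>b\<in>B. u b * b e) = 0"
    proof
      fix e
      have "(\<Sum>v\<in>B. fsc (u v) v) e = 0" using s0 by simp
      then show "(\<Sum>b\<in>B. u b * b e) = 0" by (simp add: sum_apply' fsc_def)
    qed
    with ind u show False by auto
  qed
  have "card B \<le> card ?D"
    using fv.independent_span_bound[OF finite_imageI[OF fin] indep sub] by simp
  also have "card ?D \<le> card (cells Q)" by (rule card_image_le[OF fin])
  finally show ?thesis using dk kk cB by simp
qed

lemma pstep_cons:
  assumes "pstep P (z, w1, y) (z', w2, y')" and "fst l \<in> arrs (cgraph P)" "lsrc (cgraph P) l = x" "ltgt (cgraph P) l = z"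
  shows "pstep P (x, l # w1, y) (x, l # w2, y')"
  using assms(1)
proof (cases rule: pstep.cases)
  case (cancel u m v)
  then show ?thesis using assms(2-4) pstep.cancel[of P x "l # u" m v y] by simp
next
  case (relate \<alpha> u v)
  then show ?thesis using assms(2-4) pstep.relate[of \<alpha> P x "l # u" v y] by simp
qed

lemma equivclp_cons:
  assumes "equivclp (pstep P) p q" and "fst p = z"
    and "fst l \<in> arrs (cgraph P)" "lsrc (cgraph P) l = x" "ltgt (cgraph P) l = z"
  shows "equivclp (pstep P) (x, l # word p, snd (snd p)) (x, l # word q, snd (snd q))"
  using assms(1) unfolding equivclp_def
proof (induction rule: rtranclp_induct)
  case base then show ?case by simp
next
  case (step y' z')
  have fy: "fst y' = z" using equivclp_ends[of P p y'] step(1) assms(2) by (simp add: equivclp_def)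
  have fz: "fst z' = z" using fy step(2) by (auto simp: symclp_def dest: pstep_ends)
  obtain a1 b1 c1 where y': "y' = (a1, b1, c1)" by (cases y') auto
  obtain a2 b2 c2 where z': "z' = (a2, b2, c2)" by (cases z') auto
  have "symclp (pstep P) (x, l # word y', snd (snd y')) (x, l # word z', snd (snd z'))"
    using step(2) fy fz assms(3-5) unfolding y' z'
    by (auto simp: symclp_def word_def intro: pstep_cons)
  with step(3) show ?case by (rule rtranclp.rtrancl_into_rtrancl)
qed

definition star :: "'o \<Rightarrow> 'o set \<Rightarrow> ('o, 'o \<times> 'o) graph" where
  "star o0 A = \<lparr>verts = A, arrs = {(o0, x) | x. x \<in> A \<and> x \<noteq> o0}, gsrc = fst, gtgt = snd\<rparr>"

definition SQ :: "'o \<Rightarrow> 'o set \<Rightarrow> ('o, 'o \<times> 'o, nat) computad" where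
  "SQ o0 A = \<lparr>cgraph = star o0 A, cells = {}, csrc = (\<lambda>_. undefined), ctgt = (\<lambda>_. undefined)\<rparr>"

definition cp :: "'o \<Rightarrow> 'o \<Rightarrow> ('o \<times> 'o) letter list" where
  "cp o0 x = (if x = o0 then [] else [((o0, x), True)])"

lemma SQ_simps[simp]: "cgraph (SQ o0 A) = star o0 A" "cells (SQ o0 A) = {}"
  by (simp_all add: SQ_def)

lemma star_simps[simp]: "verts (star o0 A) = A" "arrs (star o0 A) = {(o0, x) | x. x \<in> A \<and> x \<noteq> o0}"
  "gsrc (star o0 A) = fst" "gtgt (star o0 A) = snd"
  by (simp_all add: star_def)

lemma star_wf: "o0 \<in> A \<Longrightarrow> graph_wf (star o0 A)"
  by (auto simp: graph_wf_def)

lemma canon_path: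
  assumes "o0 \<in> A" "x \<in> A" "y \<in> A"
  shows "is_path (star o0 A) x (winv (cp o0 x) @ cp o0 y) y"
  using assms by (auto simp: cp_def winv_def)

lemma star_equiv:
  assumes o0: "o0 \<in> A" and p: "is_path (star o0 A) x w y"
  shows "equivclp (pstep (SQ o0 A)) (x, w, y) (x, winv (cp o0 x) @ cp o0 y, y)"
  using p
proof (induction w arbitrary: x)
  case Nil
  then have x: "x = y" "x \<in> A" by auto
  show ?case
  proof (cases "x = o0")
    case True then show ?thesis using x by (simp add: cp_def winv_def)
  next
    case False
    let ?l = "((o0, x), False)"
    have "pstep (SQ o0 A) (x, [] @ [?l, linv ?l] @ [], x) (x, [] @ [], x)"
      by (rule pstep.cancel) (use x False o0 in auto)
    then have "equivclp (pstep (SQ o0 A)) (x, [], x) (x, [?l, linv ?l], x)"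
      by (simp add: equivclp_sym r_into_equivclp)
    then show ?thesis using x False by (simp add: cp_def winv_def)
  qed
next
  case (Cons l w)
  obtain e b where l: "l = (e, b)" by (cases l) auto
  from Cons.prems have e: "e \<in> arrs (star o0 A)" and xs: "lsrc (star o0 A) l = x"
    and pw: "is_path (star o0 A) (ltgt (star o0 A) l) w y" by (auto simp: l)
  obtain t where et: "e = (o0, t)" "t \<in> A" "t \<noteq> o0" using e by auto
  have yA: "y \<in> A" using is_path_end[OF pw] by simp
  let ?z = "ltgt (star o0 A) l"
  have IH: "equivclp (pstep (SQ o0 A)) (?z, w, y) (?z, winv (cp o0 ?z) @ cp o0 y, y)"
    using Cons.IH[OF pw] .
  have lift: "equivclp (pstep (SQ o0 A)) (x, l # w, y) (x, l # (winv (cp o0 ?z) @ cp o0 y), y)"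
    using equivclp_cons[OF IH, of ?z l x] e xs l by (simp add: word_def)
  show ?case
  proof (cases b)
    case True
    then have xz: "x = o0" "?z = t" using xs et l by auto
    have "pstep (SQ o0 A) (x, [] @ [l, linv l] @ cp o0 y, y) (x, [] @ cp o0 y, y)"
      by (rule pstep.cancel) (use xz et yA o0 True l in \<open>auto simp: cp_def\<close>)
    then have "equivclp (pstep (SQ o0 A)) (x, l # (winv (cp o0 ?z) @ cp o0 y), y) (x, winv (cp o0 x) @ cp o0 y, y)"
      using xz et True l by (simp add: cp_def winv_def r_into_equivclp)
    then show ?thesis using lift by (rule equivclp_trans[rotated])
  next
    case False
    then have xz: "x = t" "?z = o0" using xs et l by auto
    have "l # (winv (cp o0 ?z) @ cp o0 y) = winv (cp o0 x) @ cp o0 y"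
      using xz et False l by (simp add: cp_def winv_def)
    then show ?thesis using lift by (metis append_Cons)
  qed
qed

lemma X_conn:
  assumes fp: "fin_presentation X P" and x: "x \<in> Obj X" and y: "y \<in> Obj X"
  shows "\<exists>f\<in>Mor X. Dom X f = x \<and> Cod X f = y"
proof -
  obtain Fo Fm where bo: "bij_betw Fo (Obj (presented P)) (Obj X)" and bm: "bij_betw Fm (Mor (presented P)) (Mor X)"
    and dc: "\<forall>f\<in>Mor (presented P). Dom X (Fm f) = Fo (Dom (presented P) f) \<and> Cod X (Fm f) = Fo (Cod (presented P) f)"
    using fp by (auto simp: fin_presentation_def presents_def groupoid_iso_def)
  have ov: "Obj (presented P) = verts (cgraph P)" by (simp add: presented_def)
  obtain x' y' where x': "x' \<in> verts (cgraph P)" "Fo x' = x" and y': "y' \<in> verts (cgraph P)" "Fo y' = y"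
    using bo x y ov by (metis bij_betw_def imageE)
  obtain w where w: "is_path (cgraph P) x' w y'"
    using fp x' y' by (auto simp: fin_presentation_def graph_connected_def)
  have m: "pclass P (x', w, y') \<in> Mor (presented P)" using w
    by (auto simp: presented_def is_path3_def)
  then have "Fm (pclass P (x', w, y')) \<in> Mor X" using bm by (auto simp: bij_betw_def)
  then show ?thesis using dc m x' y' by force
qed

definition Mx :: "('o,'m) groupoid \<Rightarrow> 'o \<Rightarrow> 'o \<Rightarrow> 'm" where
  "Mx X x y = (SOME f. f \<in> Mor X \<and> Dom X f = x \<and> Cod X f = y)"

lemma Mx_eq: "thin X \<Longrightarrow> h \<in> Mor X \<Longrightarrow> Dom X h = x \<Longrightarrow> Cod X h = y \<Longrightarrow> Mx X x y = h"
  unfolding Mx_def thin_def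
  by (rule some_equality) auto

lemma Mx_spec: "\<exists>f\<in>Mor X. Dom X f = x \<and> Cod X f = y \<Longrightarrow> Mx X x y \<in> Mor X \<and> Dom X (Mx X x y) = x \<and> Cod X (Mx X x y) = y"
  unfolding Mx_def by (rule someI_ex) auto

lemma part1:
  fixes X :: "('o,'m) groupoid"
  assumes gX: "is_groupoid X" and th: "thin X" and fp: "fin_presentation X P"
  shows "\<exists>Q :: ('o, 'o \<times> 'o, nat) computad. fin_presentation X Q \<and> has_deficiency Q 0"
proof -
  have ne: "Obj X \<noteq> {}"
  proof -
    obtain Fo where "bij_betw Fo (Obj (presented P)) (Obj X)"
      using fp by (auto simp: fin_presentation_def presents_def groupoid_iso_def)
    moreover have "Obj (presented P) \<noteq> {}" using fp
      by (auto simp: presented_def fin_presentation_def graph_connected_def)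
    ultimately show ?thesis by (auto simp: bij_betw_def)
  qed
  then obtain o0 where o0: "o0 \<in> Obj X" by auto
  define A where "A = Obj X"
  have o0A: "o0 \<in> A" using o0 by (simp add: A_def)
  define Q where "Q = SQ o0 A"
  define G where "G = star o0 A"
  have GQ: "cgraph Q = G" by (simp add: Q_def G_def)
  have wf: "graph_wf G" using star_wf[OF o0A] by (simp add: G_def)
  have conn: "graph_connected G"
    using o0A canon_path[OF o0A] by (auto simp: graph_connected_def G_def)
  have cyc0: "c e = 0" if "c \<in> cycles G" for c e
  proof (rule ccontr)
    assume ne0: "c e \<noteq> 0"
    have F: "finite {e. c e \<noteq> 0}" "{e. c e \<noteq> 0} \<subseteq> arrs G" and bd: "bdry G c (snd e) = 0"
      using that by (auto simp: cycles_def chains1_def)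
    obtain t where et: "e = (o0, t)" "t \<noteq> o0" using ne0 F(2) by (auto simp: G_def)
    have "bdry G c (snd e) = (\<Sum>e'\<in>{e. c e \<noteq> 0}. if e' = e then c e' else 0)"
      unfolding bdry_def
    proof (rule sum.cong[OF refl])
      fix e' assume "e' \<in> {e. c e \<noteq> 0}"
      then obtain t' where "e' = (o0, t')" using F(2) by (auto simp: G_def)
      then show "(if gtgt G e' = snd e then c e' else 0) - (if gsrc G e' = snd e then c e' else 0) = (if e' = e then c e' else 0)"
        using et by (auto simp: G_def)
    qed
    also have "\<dots> = c e" using F(1) ne0 by (simp add: sum.delta')
    finally show False using bd ne0 by simp
  qed
  have ec: "euler_char_is G 1"
    unfolding euler_char_is_def
    by (rule exI[of _ 1], rule exI[of _ 0]) (use quot_conn[OF conn] cyc0 in \<open>auto simp: betti1_is_def\<close>)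
  have Xc: "\<And>x y. x \<in> Obj X \<Longrightarrow> y \<in> Obj X \<Longrightarrow> \<exists>f\<in>Mor X. Dom X f = x \<and> Cod X f = y"
    using X_conn[OF fp] by blast
  have gax: "\<forall>f\<in>Mor X. Dom X f \<in> Obj X \<and> Cod X f \<in> Obj X"
    "\<forall>x\<in>Obj X. Idt X x \<in> Mor X \<and> Dom X (Idt X x) = x \<and> Cod X (Idt X x) = x"
    "\<forall>f\<in>Mor X. \<forall>g\<in>Mor X. Cod X f = Dom X g \<longrightarrow>
        Comp X g f \<in> Mor X \<and> Dom X (Comp X g f) = Dom X f \<and> Cod X (Comp X g f) = Cod X g"
    using gX by (auto simp: is_groupoid_def)
  let ?PQ = "presented Q"
  define Fm where "Fm m = Mx X (Dom ?PQ m) (Cod ?PQ m)" for m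
  have morQ: "Mor ?PQ = {pclass Q p | p. is_path3 G p}" by (simp add: presented_def GQ)
  have memQ: "\<exists>x w y. m = pclass Q (x, w, y) \<and> is_path G x w y" if "m \<in> Mor ?PQ" for m
    using that by (auto simp: morQ is_path3_def)
  have endsQ: "Dom ?PQ m \<in> Obj X \<and> Cod ?PQ m \<in> Obj X" if mm: "m \<in> Mor ?PQ" for m
  proof -
    obtain x w y where "m = pclass Q (x, w, y)" "is_path G x w y" using memQ[OF mm] by blast
    then show ?thesis using is_path_verts[OF wf] by (auto simp: G_def A_def)
  qed
  have Fm_spec: "Fm m \<in> Mor X \<and> Dom X (Fm m) = Dom ?PQ m \<and> Cod X (Fm m) = Cod ?PQ m" if "m \<in> Mor ?PQ" for m
    unfolding Fm_def by (rule Mx_spec) (use Xc endsQ[OF that] in blast)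
  have canonM: "pclass Q (x, winv (cp o0 x) @ cp o0 y, y) \<in> Mor ?PQ" if "x \<in> A" "y \<in> A" for x y
    using canon_path[OF o0A that] by (auto simp: morQ is_path3_def G_def)
  have classeq: "m1 = m2" if hh: "m1 \<in> Mor ?PQ" "m2 \<in> Mor ?PQ" "Dom ?PQ m1 = Dom ?PQ m2" "Cod ?PQ m1 = Cod ?PQ m2" for m1 m2
  proof -
    obtain x1 w1 y1 where 1: "m1 = pclass Q (x1, w1, y1)" "is_path G x1 w1 y1" using memQ[OF hh(1)] by blast
    obtain x2 w2 y2 where 2: "m2 = pclass Q (x2, w2, y2)" "is_path G x2 w2 y2" using memQ[OF hh(2)] by blast
    have e: "x1 = x2" "y1 = y2" using hh(3,4) 1 2 by simp_all
    have "equivclp (pstep Q) (x1, w1, y1) (x1, winv (cp o0 x1) @ cp o0 y1, y1)"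
      using star_equiv[OF o0A, of x1 w1 y1] 1 by (simp add: Q_def G_def)
    moreover have "equivclp (pstep Q) (x2, w2, y2) (x2, winv (cp o0 x2) @ cp o0 y2, y2)"
      using star_equiv[OF o0A, of x2 w2 y2] 2 by (simp add: Q_def G_def)
    ultimately have "equivclp (pstep Q) (x1, w1, y1) (x2, w2, y2)"
      using e by (metis equivclp_sym equivclp_trans)
    then show ?thesis using 1 2 by (simp add: pclass_eq_iff)
  qed
  have iso: "groupoid_iso ?PQ X"
    unfolding groupoid_iso_def
  proof (intro exI[of _ id] exI[of _ Fm] conjI ballI impI)
    show "bij_betw id (Obj ?PQ) (Obj X)" by (simp add: presented_def GQ G_def A_def)
    show "bij_betw Fm (Mor ?PQ) (Mor X)"
      unfolding bij_betw_def
    proof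
      show "inj_on Fm (Mor ?PQ)"
      proof (rule inj_onI)
        fix m1 m2 assume m: "m1 \<in> Mor ?PQ" "m2 \<in> Mor ?PQ" "Fm m1 = Fm m2"
        then show "m1 = m2" using Fm_spec[OF m(1)] Fm_spec[OF m(2)] by (intro classeq) auto
      qed
      show "Fm ` Mor ?PQ = Mor X"
      proof
        show "Fm ` Mor ?PQ \<subseteq> Mor X" using Fm_spec by auto
        show "Mor X \<subseteq> Fm ` Mor ?PQ"
        proof
          fix h assume h: "h \<in> Mor X"
          let ?x = "Dom X h" and ?y = "Cod X h"
          have xy: "?x \<in> A" "?y \<in> A" using gax(1) h by (auto simp: A_def)
          let ?m = "pclass Q (?x, winv (cp o0 ?x) @ cp o0 ?y, ?y)"
          have "Fm ?m = h" unfolding Fm_def by (simp add: Mx_eq[OF th h])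
          then show "h \<in> Fm ` Mor ?PQ" using canonM[OF xy] by (metis image_eqI)
        qed
      qed
    qed
    fix f assume f: "f \<in> Mor ?PQ"
    show "Dom X (Fm f) = id (Dom ?PQ f)" "Cod X (Fm f) = id (Cod ?PQ f)" using Fm_spec[OF f] by simp_all
  next
    fix x assume x: "x \<in> Obj ?PQ"
    then have xX: "x \<in> Obj X" by (simp add: presented_def GQ G_def A_def)
    have "Idt ?PQ x = pclass Q (x, [], x)" by (simp add: presented_def)
    then show "Fm (Idt ?PQ x) = Idt X (id x)"
      using Mx_eq[OF th, of "Idt X x" x x] gax(2) xX by (simp add: Fm_def)
  next
    fix f g assume f: "f \<in> Mor ?PQ" and g: "g \<in> Mor ?PQ" and fg: "Cod ?PQ f = Dom ?PQ g"
    have cmp: "Comp ?PQ g f = pclass Q (fst (crep f), word (crep f) @ word (crep g), snd (snd (crep g)))"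
      by (simp add: presented_def)
    have dcmp: "Dom ?PQ (Comp ?PQ g f) = Dom ?PQ f" "Cod ?PQ (Comp ?PQ g f) = Cod ?PQ g"
      unfolding cmp Dom_pres Cod_pres by (simp_all add: presented_def)
    have Ff: "Fm f \<in> Mor X" "Dom X (Fm f) = Dom ?PQ f" "Cod X (Fm f) = Cod ?PQ f" using Fm_spec[OF f] by auto
    have Fg: "Fm g \<in> Mor X" "Dom X (Fm g) = Dom ?PQ g" "Cod X (Fm g) = Cod ?PQ g" using Fm_spec[OF g] by auto
    have c: "Comp X (Fm g) (Fm f) \<in> Mor X" "Dom X (Comp X (Fm g) (Fm f)) = Dom ?PQ f"
      "Cod X (Comp X (Fm g) (Fm f)) = Cod ?PQ g"
      using gax(3) Ff Fg fg by auto
    show "Fm (Comp ?PQ g f) = Comp X (Fm g) (Fm f)"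
      using Mx_eq[OF th c] dcmp by (simp add: Fm_def[of "Comp ?PQ g f"])
  qed
  have "fin_presentation X Q"
    unfolding fin_presentation_def presents_def
    using iso wf conn ec by (auto simp: computad_wf_def GQ Q_def G_def)
  moreover have "has_deficiency Q 0"
    unfolding has_deficiency_def using ec by (auto simp: GQ Q_def G_def)
  ultimately show ?thesis by (intro exI[of _ Q] conjI)
qed

theorem mainTheorem12:
  fixes X :: "('o,'m) groupoid" and P :: "('v,'a,'c) computad"
  assumes "is_groupoid X" and "thin X" and "fin_presentation X P"
  shows "(\<exists>Q :: ('o, 'o \<times> 'o, nat) computad. fin_presentation X Q \<and> has_deficiency Q 0)
       \<and> (\<forall>(Q :: ('v2,'a2,'c2) computad) d. fin_presentation X Q \<longrightarrow> has_deficiency Q d \<longrightarrow> d \<le> 0)"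
  using part1[OF assms] part2[OF assms(2)] by blast

end
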